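(* Let $\mathbf L$ be a locally compact non-discrete non-Archimedean field. Each uniform polyhedron $P$ over $\mathbf L$ is an ANRU.
   Context: A simplex over $\mathbf L$ is a closed ball $x+\pi^kB(c_0(\mathbf L,A'),0,1)$ ($\pi\in\mathbf L$ of maximal absolute value $<1$, $k\in\mathbb Z$) in a coordinate subspace $c_0(\mathbf L,A')$ of the Banach space $c_0(\mathbf L,A)$ (families in $\mathbf L$ tending to zero, sup norm). A polyhedron is a subset of $c_0(\mathbf L,A)$ which is a disjoint union of simplexes $s_i$, $i\in F$; it is uniform if $\sup_i\mathrm{diam}(s_i)<\infty$ and $\inf_{i\ne j}\mathrm{dist}(s_i,s_j)>0$. An ANRU is an ultrauniform space $X$ (uniformity generated by pseudoultrametrics) such that whenever $X$ is (uniformly) embedded into an ultrauniform space $Y$, there exist a uniform neighbourhood $V$ with $X\subset V\subset Y$ and a uniformly continuous retraction $r:V\to X$. *)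

theory Defs
  imports "HOL-Analysis.Analysis"
begin

definition nonarch_abs :: "('k::field \<Rightarrow> real) \<Rightarrow> bool" where
  "nonarch_abs v \<longleftrightarrow> (\<forall>x. 0 \<le> v x) \<and> (\<forall>x. v x = 0 \<longleftrightarrow> x = 0)
     \<and> (\<forall>x y. v (x * y) = v x * v y) \<and> (\<forall>x y. v (x + y) \<le> max (v x) (v y))"

definition abs_dist :: "('k::field \<Rightarrow> real) \<Rightarrow> 'k \<Rightarrow> 'k \<Rightarrow> real" where
  "abs_dist v x y = v (x - y)"

text \<open>Non-discrete: 0 (hence every point) is not isolated.\<close>
definition nondiscrete_abs :: "('k::field \<Rightarrow> real) \<Rightarrow> bool" where
  "nondiscrete_abs v \<longleftrightarrow> (\<forall>e>0. \<exists>x. x \<noteq> 0 \<and> v x < e)"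

definition locally_compact_abs :: "('k::field \<Rightarrow> real) \<Rightarrow> bool" where
  "locally_compact_abs v \<longleftrightarrow>
     locally_compact_space (Metric_space.mtopology (UNIV::'k set) (abs_dist v))"

definition c0 :: "('k::field \<Rightarrow> real) \<Rightarrow> 'a set \<Rightarrow> ('a \<Rightarrow> 'k) set" where
  "c0 v A = {x. (\<forall>a. a \<notin> A \<longrightarrow> x a = 0) \<and> (\<forall>e>0. finite {a. e \<le> v (x a)})}"

definition c0norm :: "('k::field \<Rightarrow> real) \<Rightarrow> ('a \<Rightarrow> 'k) \<Rightarrow> real" where
  "c0norm v x = (SUP a. v (x a))"

definition c0dist :: "('k::field \<Rightarrow> real) \<Rightarrow> ('a \<Rightarrow> 'k) \<Rightarrow> ('a \<Rightarrow> 'k) \<Rightarrow> real" where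
  "c0dist v x y = c0norm v (\<lambda>a. x a - y a)"

definition c0_simplex :: "('k::field \<Rightarrow> real) \<Rightarrow> 'k \<Rightarrow> 'a set \<Rightarrow> ('a \<Rightarrow> 'k) set \<Rightarrow> bool" where
  "c0_simplex v p A s \<longleftrightarrow> (\<exists>x A' k. A' \<subseteq> A \<and> x \<in> c0 v A \<and>
      s = {(\<lambda>a. x a + p powi (k::int) * y a) | y. y \<in> c0 v A' \<and> c0norm v y \<le> 1})"

definition uniform_polyhedron ::
  "('k::field \<Rightarrow> real) \<Rightarrow> 'k \<Rightarrow> 'a set \<Rightarrow> ('a \<Rightarrow> 'k) set \<Rightarrow> bool" where
  "uniform_polyhedron v p A P \<longleftrightarrow> P \<subseteq> c0 v A \<and>
     (\<exists>S. (\<forall>s\<in>S. c0_simplex v p A s) \<and> pairwise disjnt S \<and> \<Union>S = P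
        \<and> (\<exists>C. \<forall>s\<in>S. \<forall>x\<in>s. \<forall>y\<in>s. c0dist v x y \<le> C)
        \<and> (\<exists>\<delta>>0. \<forall>s\<in>S. \<forall>t\<in>S. s \<noteq> t \<longrightarrow> (\<forall>x\<in>s. \<forall>y\<in>t. \<delta> \<le> c0dist v x y)))"

definition pseudoultrametric :: "'a set \<Rightarrow> ('a \<Rightarrow> 'a \<Rightarrow> real) \<Rightarrow> bool" where
  "pseudoultrametric X d \<longleftrightarrow> (\<forall>x\<in>X. d x x = 0) \<and> (\<forall>x\<in>X. \<forall>y\<in>X. 0 \<le> d x y \<and> d x y = d y x)
     \<and> (\<forall>x\<in>X. \<forall>y\<in>X. \<forall>z\<in>X. d x z \<le> max (d x y) (d y z))"

definition generated_uniformity :: "'a set \<Rightarrow> ('a \<Rightarrow> 'a \<Rightarrow> real) set \<Rightarrow> ('a \<times> 'a) set set" where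
  "generated_uniformity X D = {E. E \<subseteq> X \<times> X \<and> (\<exists>F e. finite F \<and> F \<subseteq> D \<and> 0 < e \<and>
       {(x, y). x \<in> X \<and> y \<in> X \<and> (\<forall>d\<in>F. d x y < e)} \<subseteq> E)}"

definition ultrauniform_space :: "'a set \<Rightarrow> ('a \<times> 'a) set set \<Rightarrow> bool" where
  "ultrauniform_space X U \<longleftrightarrow>
     (\<exists>D. (\<forall>d\<in>D. pseudoultrametric X d) \<and> U = generated_uniformity X D)"

definition subspace_uniformity :: "('a \<times> 'a) set set \<Rightarrow> 'a set \<Rightarrow> ('a \<times> 'a) set set" where
  "subspace_uniformity U S = {E \<inter> (S \<times> S) | E. E \<in> U}"

definition unif_cont_map ::
  "'a set \<Rightarrow> ('a \<times> 'a) set set \<Rightarrow> 'b set \<Rightarrow> ('b \<times> 'b) set set \<Rightarrow> ('a \<Rightarrow> 'b) \<Rightarrow> bool" where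
  "unif_cont_map X U Y W f \<longleftrightarrow> f ` X \<subseteq> Y \<and>
     (\<forall>E\<in>W. \<exists>D\<in>U. \<forall>x y. (x, y) \<in> D \<longrightarrow> (f x, f y) \<in> E)"

definition uniform_embedding ::
  "'a set \<Rightarrow> ('a \<times> 'a) set set \<Rightarrow> 'b set \<Rightarrow> ('b \<times> 'b) set set \<Rightarrow> ('a \<Rightarrow> 'b) \<Rightarrow> bool" where
  "uniform_embedding X U Y W e \<longleftrightarrow> inj_on e X \<and> unif_cont_map X U Y W e \<and>
     (\<exists>g. unif_cont_map (e ` X) (subspace_uniformity W (e ` X)) X U g \<and> (\<forall>x\<in>X. g (e x) = x))"

definition uniform_nbhd :: "'b set \<Rightarrow> ('b \<times> 'b) set set \<Rightarrow> 'b set \<Rightarrow> 'b set \<Rightarrow> bool" where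
  "uniform_nbhd Y W S V \<longleftrightarrow> S \<subseteq> V \<and> V \<subseteq> Y \<and> (\<exists>E\<in>W. {y. \<exists>x\<in>S. (x, y) \<in> E} \<subseteq> V)"

text \<open>ANRU, with ambient spaces Y ranging over the type 'b (the theorem is generic in 'b).\<close>
definition ANRU :: "'a set \<Rightarrow> ('a \<times> 'a) set set \<Rightarrow> 'b itself \<Rightarrow> bool" where
  "ANRU X U (T::'b itself) \<longleftrightarrow> ultrauniform_space X U \<and>
     (\<forall>(Y::'b set) W e. ultrauniform_space Y W \<and> uniform_embedding X U Y W e \<longrightarrow>
        (\<exists>V r. uniform_nbhd Y W (e ` X) V \<and>
               unif_cont_map V (subspace_uniformity W V) (e ` X) (subspace_uniformity W (e ` X)) r \<and>
               (\<forall>y\<in>e ` X. r y = y)))"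

definition c0_uniformity :: "('k::field \<Rightarrow> real) \<Rightarrow> ('a \<Rightarrow> 'k) set \<Rightarrow> (('a \<Rightarrow> 'k) \<times> ('a \<Rightarrow> 'k)) set set" where
  "c0_uniformity v P = generated_uniformity P {c0dist v}"

end

theory Submission
  imports Defs
begin

lemma na_props:
  assumes "nonarch_abs v"
  shows "v 0 = 0" "v 1 = 1" "\<And>x. v (- x) = v x" "\<And>x y. v (x - y) = v (y - x)"
    "\<And>x y z. v (x - z) \<le> max (v (x - y)) (v (y - z))"
    "\<And>x y. v (x * y) = v x * v y" "\<And>x. 0 \<le> v x" "\<And>x. v x = 0 \<longleftrightarrow> x = 0"
    "\<And>x y. v (x + y) \<le> max (v x) (v y)"
proof -
  have nn: "\<And>x. 0 \<le> v x" and z: "\<And>x. v x = 0 \<longleftrightarrow> x = 0"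
    and m: "\<And>x y. v (x * y) = v x * v y" and u: "\<And>x y. v (x + y) \<le> max (v x) (v y)"
    using assms unfolding nonarch_abs_def by auto
  show "v 0 = 0" using z by simp
  have "v 1 = v 1 * v 1" using m[of 1 1] by simp
  moreover have "v 1 \<noteq> 0" using z by simp
  ultimately show v1: "v 1 = 1" by (metis mult_cancel_left1)
  have "v (-1) * v (-1) = 1" using m[of "-1" "-1"] v1 by simp
  hence vm1: "v (-1) = 1" using nn[of "-1"]
    by (metis abs_of_nonneg abs_square_eq_1 power2_eq_square)
  show neg: "\<And>x. v (- x) = v x" using m vm1 by (metis minus_mult_left mult_1 mult_1_left)
  show "\<And>x y. v (x - y) = v (y - x)" using neg by (metis minus_diff_eq)
  show "\<And>x y z. v (x - z) \<le> max (v (x - y)) (v (y - z))"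
    using u by (metis add_diff_cancel_left' diff_add_cancel diff_add_eq)
  show "\<And>x y. v (x * y) = v x * v y" "\<And>x. 0 \<le> v x" "\<And>x. v x = 0 \<longleftrightarrow> x = 0"
    "\<And>x y. v (x + y) \<le> max (v x) (v y)" using nn z m u by auto
qed

lemma abs_metric:
  assumes "nonarch_abs v"
  shows "Metric_space UNIV (abs_dist v)"
proof
  note na = na_props[OF assms]
  fix x y z :: 'a
  show "0 \<le> abs_dist v x y" using na by (simp add: abs_dist_def)
  show "abs_dist v x y = abs_dist v y x" using na by (simp add: abs_dist_def)
  show "abs_dist v x y = 0 \<longleftrightarrow> x = y" using na by (simp add: abs_dist_def)
  have "abs_dist v x z \<le> max (abs_dist v x y) (abs_dist v y z)" unfolding abs_dist_def by (rule na(5))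
  then show "abs_dist v x z \<le> abs_dist v x y + abs_dist v y z" using na(7)
    by (smt (verit) abs_dist_def)
qed

lemma field_complete:
  fixes v :: "'k::field \<Rightarrow> real" and u :: "nat \<Rightarrow> 'k"
  assumes na: "nonarch_abs v" and lc: "locally_compact_abs v"
    and cau: "\<And>m n. m \<le> n \<Longrightarrow> v (u n - u m) \<le> r m"
    and r0: "\<And>e. e > 0 \<Longrightarrow> \<exists>m. r m < e"
  shows "\<exists>w. \<forall>e>0. \<exists>N. \<forall>n\<ge>N. v (u n - w) < e"
proof -
  note na = na_props[OF na]
  interpret M: Metric_space UNIV "abs_dist v" by (rule abs_metric[OF assms(1)])
  obtain U K where U: "openin M.mtopology U" "compactin M.mtopology K" "0 \<in> U" "U \<subseteq> K"
    using lc unfolding locally_compact_abs_def locally_compact_space_def by force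
  then obtain \<epsilon> where eps: "\<epsilon> > 0" "M.mball 0 \<epsilon> \<subseteq> U"
    using M.openin_mtopology by blast
  obtain N where N: "r N < \<epsilon>" using r0 eps by blast
  define \<sigma> where "\<sigma> n = u (n + N) - u N" for n
  have "range \<sigma> \<subseteq> K"
  proof
    fix y assume "y \<in> range \<sigma>"
    then obtain n where "y = \<sigma> n" by auto
    then have "v y \<le> r N" using cau[of N "n+N"] by (simp add: \<sigma>_def)
    then have "y \<in> M.mball 0 \<epsilon>" using N na by (simp add: abs_dist_def)
    then show "y \<in> K" using eps U by auto
  qed
  then obtain l rr where l: "strict_mono rr" "limitin M.mtopology (\<sigma> \<circ> rr) l sequentially"
    using U(2) M.compactin_sequentially by meson
  have cc: "\<forall>e>0. \<exists>Na. \<forall>n n'. Na \<le> n \<longrightarrow> Na \<le> n' \<longrightarrow> abs_dist v (\<sigma> n) (\<sigma> n') < e"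
  proof (intro allI impI)
    fix e :: real assume "e > 0"
    then obtain m where m: "r m < e" using r0 by blast
    show "\<exists>Na. \<forall>n n'. Na \<le> n \<longrightarrow> Na \<le> n' \<longrightarrow> abs_dist v (\<sigma> n) (\<sigma> n') < e"
    proof (intro exI allI impI)
      fix n n' assume "m \<le> n" "m \<le> n'"
      have "abs_dist v (\<sigma> n) (\<sigma> n') = v (u (n+N) - u (n'+N))"
        by (simp add: abs_dist_def \<sigma>_def)
      also have "\<dots> \<le> max (v (u (n+N) - u m)) (v (u m - u (n'+N)))" by (rule na(5))
      also have "\<dots> \<le> r m" using cau[of m "n+N"] cau[of m "n'+N"] na(4)[of "u m"] \<open>m \<le> n\<close> \<open>m \<le> n'\<close>
        by auto
      finally show "abs_dist v (\<sigma> n) (\<sigma> n') < e" using m by simp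
    qed
  qed
  have "M.MCauchy \<sigma>" unfolding M.MCauchy_def using cc by simp
  then have lim: "limitin M.mtopology \<sigma> l sequentially"
    using M.MCauchy_convergent_subsequence l by blast
  show ?thesis
  proof (rule exI[of _ "l + u N"], intro allI impI)
    fix e :: real assume "e > 0"
    then have "eventually (\<lambda>n. abs_dist v (\<sigma> n) l < e) sequentially"
      using lim unfolding M.limitin_metric by auto
    then obtain N2 where N2: "\<And>n. n \<ge> N2 \<Longrightarrow> abs_dist v (\<sigma> n) l < e"
      unfolding eventually_sequentially by blast
    show "\<exists>Na. \<forall>n\<ge>Na. v (u n - (l + u N)) < e"
    proof (rule exI[of _ "N2 + N"], intro allI impI)
      fix n assume "N2 + N \<le> n"
      then have "abs_dist v (\<sigma> (n - N)) l < e" using N2 by simp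
      moreover have "\<sigma> (n - N) - l = u n - (l + u N)" using \<open>N2 + N \<le> n\<close>
        by (simp add: \<sigma>_def algebra_simps)
      ultimately show "v (u n - (l + u N)) < e" by (simp add: abs_dist_def)
    qed
  qed
qed

lemma c0_bdd:
  assumes na: "nonarch_abs v" and x: "x \<in> c0 v A"
  shows "bdd_above (range (\<lambda>a. v (x a)))"
proof -
  note na = na_props[OF na]
  let ?F = "{a. 1 \<le> v (x a)}"
  have fin: "finite ?F" using x unfolding c0_def by auto
  have "v (x a) \<le> 1 + (\<Sum>b\<in>?F. v (x b))" for a
  proof (cases "a \<in> ?F")
    case True
    then have "v (x a) \<le> (\<Sum>b\<in>?F. v (x b))"
      using fin by (intro member_le_sum) (auto simp: na)
    then show ?thesis by simp
  next
    case False
    then have "v (x a) < 1" by simp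
    moreover have "0 \<le> (\<Sum>b\<in>?F. v (x b))" by (intro sum_nonneg) (simp add: na)
    ultimately show ?thesis by simp
  qed
  then show ?thesis by (intro bdd_aboveI2) blast
qed

lemma c0_le_norm:
  assumes "nonarch_abs v" "x \<in> c0 v A"
  shows "v (x a) \<le> c0norm v x"
  unfolding c0norm_def by (rule cSUP_upper[OF _ c0_bdd[OF assms]]) simp

lemma c0norm_le:
  assumes "\<And>a. v (x a) \<le> B"
  shows "c0norm v x \<le> B"
  unfolding c0norm_def by (rule cSUP_least) (auto simp: assms)

lemma c0_diff:
  assumes na: "nonarch_abs v" and x: "x \<in> c0 v A" and y: "y \<in> c0 v A"
  shows "(\<lambda>a. x a - y a) \<in> c0 v A"
proof -
  note na = na_props[OF na]
  have "{a. e \<le> v (x a - y a)} \<subseteq> {a. e \<le> v (x a)} \<union> {a. e \<le> v (y a)}" for e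
  proof
    fix a assume "a \<in> {a. e \<le> v (x a - y a)}"
    moreover have "v (x a - y a) \<le> max (v (x a)) (v (- y a))"
      using na(9)[of "x a" "- y a"] by simp
    ultimately show "a \<in> {a. e \<le> v (x a)} \<union> {a. e \<le> v (y a)}" using na(3) by auto
  qed
  note sub = this
  show ?thesis unfolding c0_def
  proof (intro CollectI conjI allI impI)
    fix a assume "a \<notin> A" then show "x a - y a = 0" using x y unfolding c0_def by auto
  next
    fix e :: real assume "e > 0"
    have "finite ({a. e \<le> v (x a)} \<union> {a. e \<le> v (y a)})"
      using x y \<open>e > 0\<close> unfolding c0_def by auto
    then show "finite {a. e \<le> v (x a - y a)}" using sub by (rule finite_subset[rotated])
  qed
qed

lemma c0dist_ge:
  assumes "nonarch_abs v" "x \<in> c0 v A" "y \<in> c0 v A"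
  shows "v (x a - y a) \<le> c0dist v x y"
  unfolding c0dist_def using c0_le_norm[OF assms(1) c0_diff[OF assms]] .

lemma c0dist_le:
  assumes "\<And>a. v (x a - y a) \<le> B"
  shows "c0dist v x y \<le> B"
  unfolding c0dist_def by (rule c0norm_le) (simp add: assms)

lemma c0dist_props:
  assumes na: "nonarch_abs v"
  shows "pseudoultrametric (c0 v A) (c0dist v)"
    and "\<And>x y. x \<in> c0 v A \<Longrightarrow> y \<in> c0 v A \<Longrightarrow> c0dist v x y = 0 \<Longrightarrow> x = y"
    and "\<And>x y. x \<in> c0 v A \<Longrightarrow> y \<in> c0 v A \<Longrightarrow> 0 \<le> c0dist v x y"
proof -
  note nap = na_props[OF na]
  have nn: "0 \<le> c0dist v x y" if "x \<in> c0 v A" "y \<in> c0 v A" for x y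
    using c0dist_ge[OF na that] nap(7) by (meson order.trans)
  then show "\<And>x y. x \<in> c0 v A \<Longrightarrow> y \<in> c0 v A \<Longrightarrow> 0 \<le> c0dist v x y" .
  show "pseudoultrametric (c0 v A) (c0dist v)"
    unfolding pseudoultrametric_def
  proof (intro conjI ballI)
    fix x assume x: "x \<in> c0 v A"
    have "c0dist v x x \<le> 0" by (rule c0dist_le) (simp add: nap)
    then show "c0dist v x x = 0" using nn[OF x x] by simp
  next
    fix x y assume x: "x \<in> c0 v A" and y: "y \<in> c0 v A"
    show "0 \<le> c0dist v x y" using nn[OF x y] .
    have "c0dist v x y \<le> c0dist v y x" 
      by (rule c0dist_le) (metis c0dist_ge[OF na y x] nap(4))
    moreover have "c0dist v y x \<le> c0dist v x y" 
      by (rule c0dist_le) (metis c0dist_ge[OF na x y] nap(4))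
    ultimately show "c0dist v x y = c0dist v y x" by simp
  next
    fix x y z assume x: "x \<in> c0 v A" and y: "y \<in> c0 v A" and z: "z \<in> c0 v A"
    show "c0dist v x z \<le> max (c0dist v x y) (c0dist v y z)"
    proof (rule c0dist_le)
      fix a
      have "v (x a - z a) \<le> max (v (x a - y a)) (v (y a - z a))" by (rule nap(5))
      also have "\<dots> \<le> max (c0dist v x y) (c0dist v y z)"
        using c0dist_ge[OF na x y, of a] c0dist_ge[OF na y z, of a] by (rule max.mono)
      finally show "v (x a - z a) \<le> max (c0dist v x y) (c0dist v y z)" .
    qed
  qed
  fix x y assume x: "x \<in> c0 v A" and y: "y \<in> c0 v A" and "c0dist v x y = 0"
  then have "v (x a - y a) \<le> 0" for a using c0dist_ge[OF na x y, of a] by simp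
  then have "v (x a - y a) = 0" for a using nap(7) by (metis order.antisym)
  then show "x = y" using nap(8) by auto
qed

lemma c0_complete:
  fixes v :: "'k::field \<Rightarrow> real" and x :: "nat \<Rightarrow> 'a \<Rightarrow> 'k"
  assumes na: "nonarch_abs v" and lc: "locally_compact_abs v"
    and x: "\<And>n. x n \<in> c0 v A"
    and cau: "\<And>m n. m \<le> n \<Longrightarrow> c0dist v (x n) (x m) \<le> r m"
    and rpos: "\<And>m. r m > 0"
    and r0: "\<And>e. e > 0 \<Longrightarrow> \<exists>m. r m < e"
  shows "\<exists>z\<in>c0 v A. \<forall>m. c0dist v z (x m) \<le> r m"
proof -
  note nap = na_props[OF na]
  have "\<exists>w. \<forall>e>0. \<exists>N. \<forall>n\<ge>N. v (x n a - w) < e" for a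
  proof (rule field_complete[OF na lc, of "\<lambda>n. x n a" r])
    fix m n :: nat assume "m \<le> n"
    then show "v (x n a - x m a) \<le> r m" using c0dist_ge[OF na x x] cau by (meson order.trans)
  qed (rule r0)
  then obtain z where zl: "\<And>a e. e > 0 \<Longrightarrow> \<exists>N. \<forall>n\<ge>N. v (x n a - z a) < e" by metis
  have dz: "v (z a - x m a) \<le> r m" for a m
  proof -
    obtain N where N: "\<forall>n\<ge>N. v (x n a - z a) < r m" using zl rpos by blast
    let ?n = "max N m"
    have "v (z a - x m a) \<le> max (v (z a - x ?n a)) (v (x ?n a - x m a))" by (rule nap(5))
    moreover have "v (z a - x ?n a) < r m" using N nap(4) by (metis max.cobounded1)
    moreover have "v (x ?n a - x m a) \<le> r m"
      using c0dist_ge[OF na x x] cau[of m ?n] by (meson max.cobounded2 order.trans)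
    ultimately show ?thesis by simp
  qed
  have "z \<in> c0 v A" unfolding c0_def
  proof (intro CollectI conjI allI impI)
    fix a assume "a \<notin> A"
    then have "x m a = 0" for m using x unfolding c0_def by auto
    then have le: "v (z a) \<le> r m" for m using dz[of a m] by simp
    have "v (z a) \<le> 0"
    proof (rule ccontr)
      assume "\<not> v (z a) \<le> 0"
      then obtain m where "r m < v (z a)" using r0 by force
      then show False using le[of m] by simp
    qed
    then show "z a = 0" using nap(7)[of "z a"] nap(8) by (metis order.antisym)
  next
    fix e :: real assume "e > 0"
    then obtain m where m: "r m < e" using r0 by blast
    have "{a. e \<le> v (z a)} \<subseteq> {a. e \<le> v (x m a)}"
    proof
      fix a assume "a \<in> {a. e \<le> v (z a)}"
      moreover have "v (z a) \<le> max (v (z a - x m a)) (v (x m a))"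
        using nap(9)[of "z a - x m a" "x m a"] by simp
      ultimately show "a \<in> {a. e \<le> v (x m a)}" using dz[of a m] m by auto
    qed
    moreover have "finite {a. e \<le> v (x m a)}" using x[of m] \<open>e > 0\<close> unfolding c0_def by auto
    ultimately show "finite {a. e \<le> v (z a)}" by (rule finite_subset)
  qed
  moreover have "c0dist v z (x m) \<le> r m" for m by (rule c0dist_le) (rule dz)
  ultimately show ?thesis by blast
qed

lemma poly_complete:
  fixes v :: "'k::field \<Rightarrow> real"
  assumes na: "nonarch_abs v" and nd: "nondiscrete_abs v" and lc: "locally_compact_abs v"
    and pv: "\<forall>y. v y < 1 \<longrightarrow> v y \<le> v p"
    and up: "uniform_polyhedron v p A P"
  shows "\<exists>\<delta>>0. \<forall>(x::nat \<Rightarrow> 'a \<Rightarrow> 'k) (r::nat \<Rightarrow> real). (\<forall>n. x n \<in> P) \<and> (\<forall>m n. m \<le> n \<longrightarrow> c0dist v (x n) (x m) \<le> r m)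
     \<and> (\<forall>m. 0 < r m \<and> r m < \<delta>) \<and> (\<forall>e>0. \<exists>m. r m < e) \<longrightarrow> (\<exists>z\<in>P. \<forall>m. c0dist v z (x m) \<le> r m)"
proof -
  note nap = na_props[OF na]
  have PA: "P \<subseteq> c0 v A" using up unfolding uniform_polyhedron_def by (rule conjunct1)
  obtain S \<delta> where S: "\<forall>s\<in>S. c0_simplex v p A s" "\<Union>S = P" "\<delta> > 0"
     "\<forall>s\<in>S. \<forall>t\<in>S. s \<noteq> t \<longrightarrow> (\<forall>x\<in>s. \<forall>y\<in>t. \<delta> \<le> c0dist v x y)"
  proof -
    from up have "\<exists>S. (\<forall>s\<in>S. c0_simplex v p A s) \<and> pairwise disjnt S \<and> \<Union>S = P
        \<and> (\<exists>C. \<forall>s\<in>S. \<forall>x\<in>s. \<forall>y\<in>s. c0dist v x y \<le> C)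
        \<and> (\<exists>\<delta>>0. \<forall>s\<in>S. \<forall>t\<in>S. s \<noteq> t \<longrightarrow> (\<forall>x\<in>s. \<forall>y\<in>t. \<delta> \<le> c0dist v x y))"
      unfolding uniform_polyhedron_def by (rule conjunct2)
    then obtain S where S0: "(\<forall>s\<in>S. c0_simplex v p A s) \<and> pairwise disjnt S \<and> \<Union>S = P
        \<and> (\<exists>C. \<forall>s\<in>S. \<forall>x\<in>s. \<forall>y\<in>s. c0dist v x y \<le> C)
        \<and> (\<exists>\<delta>>0. \<forall>s\<in>S. \<forall>t\<in>S. s \<noteq> t \<longrightarrow> (\<forall>x\<in>s. \<forall>y\<in>t. \<delta> \<le> c0dist v x y))"
      by (rule exE)
    note S = conjunct1[OF S0] conjunct1[OF conjunct2[OF conjunct2[OF S0]]]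
      conjunct2[OF conjunct2[OF conjunct2[OF conjunct2[OF S0]]]]
    from S(3) obtain \<delta> where d: "\<delta> > 0" "\<forall>s\<in>S. \<forall>t\<in>S. s \<noteq> t \<longrightarrow> (\<forall>x\<in>s. \<forall>y\<in>t. \<delta> \<le> c0dist v x y)"
      by (elim exE conjE)
    show ?thesis by (rule that[OF S(1) S(2) d(1) d(2)])
  qed
  have p0: "p \<noteq> 0"
  proof
    assume "p = 0"
    obtain y where y: "y \<noteq> 0" "v y < 1" using nd[unfolded nondiscrete_abs_def, rule_format, of 1] by auto
    have "v y \<le> v p" using pv y by blast
    then have "v y \<le> 0" using \<open>p = 0\<close> nap(1) by simp
    then have "v y = 0" using nap(7)[of y] by simp
    then show False using nap(8) y by simp
  qed
  show ?thesis
  proof (rule exI[of _ \<delta>], intro conjI allI impI)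
    show "\<delta> > 0" by fact
    fix x :: "nat \<Rightarrow> 'a \<Rightarrow> 'k" and r :: "nat \<Rightarrow> real" assume H: "(\<forall>n. x n \<in> P) \<and> (\<forall>m n. m \<le> n \<longrightarrow> c0dist v (x n) (x m) \<le> r m)
     \<and> (\<forall>m. 0 < r m \<and> r m < \<delta>) \<and> (\<forall>e>0. \<exists>m. r m < e)"
    then have xP: "\<And>n. x n \<in> P" and cau: "\<And>m n. m \<le> n \<Longrightarrow> c0dist v (x n) (x m) \<le> r m"
      and rpos: "\<And>m. 0 < r m" and rd: "\<And>m. r m < \<delta>" and r0: "\<And>e. e > 0 \<Longrightarrow> \<exists>m. r m < e"
      by auto
    have xA: "\<And>n. x n \<in> c0 v A" using xP PA by auto
    obtain s where s: "s \<in> S" "x 0 \<in> s" using xP[of 0] S(2) by auto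
    have xs: "x n \<in> s" for n
    proof -
      obtain t where t: "t \<in> S" "x n \<in> t" using xP[of n] S(2) by auto
      have "c0dist v (x 0) (x n) = c0dist v (x n) (x 0)"
        using c0dist_props(1)[OF na, where A=A] xA[of 0] xA[of n] unfolding pseudoultrametric_def by blast
      also have "\<dots> < \<delta>" using cau[of 0 n] rd[of 0] by simp
      finally have lt: "c0dist v (x 0) (x n) < \<delta>" .
      show ?thesis
      proof (rule ccontr)
        assume "x n \<notin> s"
        then have "s \<noteq> t" using t by auto
        then have "\<delta> \<le> c0dist v (x 0) (x n)" using S(4) s t by blast
        then show False using lt by simp
      qed
    qed
    obtain z where z: "z \<in> c0 v A" "\<And>m. c0dist v z (x m) \<le> r m"
      using c0_complete[OF na lc xA cau rpos r0] by blast
    obtain c A' k where sd: "A' \<subseteq> A" "c \<in> c0 v A"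
      "s = {(\<lambda>a. c a + p powi (k::int) * y a) | y. y \<in> c0 v A' \<and> c0norm v y \<le> 1}"
      using S(1) s unfolding c0_simplex_def by auto
    define q where "q = p powi k"
    have q0: "q \<noteq> 0" using p0 unfolding q_def by simp
    then have vq: "v q > 0" using nap(7,8) by (metis order.not_eq_order_implies_strict)
    have ex: "\<forall>n. \<exists>y. x n = (\<lambda>a. c a + q * y a) \<and> y \<in> c0 v A' \<and> c0norm v y \<le> 1"
    proof
      fix n
      have "x n \<in> {(\<lambda>a. c a + p powi (k::int) * y a) | y. y \<in> c0 v A' \<and> c0norm v y \<le> 1}"
        using xs[of n] sd(3) by simp
      then obtain y where "x n = (\<lambda>a. c a + p powi (k::int) * y a)" "y \<in> c0 v A'" "c0norm v y \<le> 1"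
        by blast
      then show "\<exists>y. x n = (\<lambda>a. c a + q * y a) \<and> y \<in> c0 v A' \<and> c0norm v y \<le> 1"
        unfolding q_def by blast
    qed
    obtain yy where yy0: "\<forall>n. x n = (\<lambda>a. c a + q * yy n a) \<and> yy n \<in> c0 v A' \<and> c0norm v (yy n) \<le> 1"
      using choice[OF ex] by blast
    have yy: "\<And>n. x n = (\<lambda>a. c a + q * yy n a)" "\<And>n. yy n \<in> c0 v A'"
      "\<And>n. c0norm v (yy n) \<le> 1" using yy0 by auto
    define y where "y a = (z a - c a) / q" for a
    have zy: "z = (\<lambda>a. c a + q * y a)" using q0 unfolding y_def by auto
    have vy: "v (y a) * v q = v (z a - c a)" for a
    proof -
      have "y a * q = z a - c a" using q0 unfolding y_def by simp
      then show ?thesis using nap(6)[of "y a" q] by simp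
    qed
    have zx: "v (z a - x m a) \<le> r m" for a m
      using c0dist_ge[OF na z(1) xA] z(2) by (meson order.trans)
    have b1: "v (z a - c a) \<le> v q" for a
    proof -
      obtain m where m: "r m < v q" using r0 vq by blast
      have "v (z a - c a) \<le> max (v (z a - x m a)) (v (x m a - c a))" by (rule nap(5))
      moreover have "v (x m a - c a) = v q * v (yy m a)" using yy(1)[of m] nap(6) by simp
      moreover have "v (yy m a) \<le> 1" using c0_le_norm[OF na yy(2)] yy(3) by (meson order.trans)
      then have "v q * v (yy m a) \<le> v q" using vq by (simp add: mult_left_le)
      ultimately show ?thesis using zx[of a m] m by auto
    qed
    have yn: "v (y a) \<le> 1" for a
    proof -
      have "v (y a) * v q \<le> 1 * v q" using b1[of a] vy[of a] by simp
      then show ?thesis using vq by (simp only: mult_le_cancel_right_pos)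
    qed
    have "y \<in> c0 v A'" unfolding c0_def
    proof (intro CollectI conjI allI impI)
      fix a assume "a \<notin> A'"
      then have "yy m a = 0" for m using yy(2) unfolding c0_def by auto
      then have "v (z a - c a) \<le> r m" for m using zx[of a m] yy(1)[of m] by simp
      note le = this
      have "v (z a - c a) \<le> 0"
      proof (rule ccontr)
        assume "\<not> v (z a - c a) \<le> 0"
        then obtain m where "r m < v (z a - c a)" using r0 by force
        then show False using le[of m] by simp
      qed
      then have "z a - c a = 0" using nap(7,8) by (metis order.antisym)
      then show "y a = 0" unfolding y_def by simp
    next
      fix e :: real assume "e > 0"
      have "{a. e \<le> v (y a)} \<subseteq> {a. e * v q \<le> v (z a - c a)}"
        using vy vq by (metis (mono_tags, lifting) Collect_mono less_imp_le mult_right_mono)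
      moreover have "finite {a. e * v q \<le> v (z a - c a)}"
        using c0_diff[OF na z(1) sd(2)] \<open>e > 0\<close> vq unfolding c0_def by auto
      ultimately show "finite {a. e \<le> v (y a)}" by (rule finite_subset)
    qed
    moreover have "c0norm v y \<le> 1" using yn by (rule c0norm_le)
    ultimately have "z \<in> s" unfolding sd(3) zy q_def by auto
    then have "z \<in> P" using s S(2) by auto
    then show "\<exists>z\<in>P. \<forall>m. c0dist v z (x m) \<le> r m" using z(2) by blast
  qed
qed

definition eqrel :: "'b set \<Rightarrow> ('b \<times> 'b) set \<Rightarrow> bool" where
  "eqrel Y B \<longleftrightarrow> B \<subseteq> Y \<times> Y \<and> (\<forall>a\<in>Y. (a, a) \<in> B) \<and> (\<forall>a b. (a, b) \<in> B \<longrightarrow> (b, a) \<in> B)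
     \<and> (\<forall>a b c. (a, b) \<in> B \<longrightarrow> (b, c) \<in> B \<longrightarrow> (a, c) \<in> B)"

lemma gen_unif_P:
  assumes "D \<in> generated_uniformity X {d}"
  shows "\<exists>\<eta>>0. \<forall>x\<in>X. \<forall>y\<in>X. d x y < \<eta> \<longrightarrow> (x, y) \<in> D"
proof -
  obtain F e where Fe: "F \<subseteq> {d}" "0 < e" "{(x, y). x \<in> X \<and> y \<in> X \<and> (\<forall>d\<in>F. d x y < e)} \<subseteq> D"
    using assms unfolding generated_uniformity_def by blast
  have "\<forall>x\<in>X. \<forall>y\<in>X. d x y < e \<longrightarrow> (x, y) \<in> D"
  proof (intro ballI impI)
    fix x y assume "x \<in> X" "y \<in> X" "d x y < e"
    then have "(x, y) \<in> {(x, y). x \<in> X \<and> y \<in> X \<and> (\<forall>d\<in>F. d x y < e)}" using Fe(1) by auto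
    then show "(x, y) \<in> D" using Fe(3) by blast
  qed
  then show ?thesis using Fe(2) by blast
qed

lemma gen_unif_ball:
  assumes "\<rho> > 0"
  shows "{(x, y). x \<in> X \<and> y \<in> X \<and> d x y < \<rho>} \<in> generated_uniformity X {d}"
  unfolding generated_uniformity_def
proof (intro CollectI conjI)
  show "{(x, y). x \<in> X \<and> y \<in> X \<and> d x y < \<rho>} \<subseteq> X \<times> X" by auto
  show "\<exists>F e. finite F \<and> F \<subseteq> {d} \<and> 0 < e \<and> {(x, y). x \<in> X \<and> y \<in> X \<and> (\<forall>d\<in>F. d x y < e)}
          \<subseteq> {(x, y). x \<in> X \<and> y \<in> X \<and> d x y < \<rho>}"
    by (rule exI[of _ "{d}"], rule exI[of _ \<rho>]) (auto simp: assms)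
qed

lemma uu_sub:
  assumes "ultrauniform_space Y W" "E \<in> W"
  shows "E \<subseteq> Y \<times> Y"
  using assms unfolding ultrauniform_space_def generated_uniformity_def by blast

lemma uu_eqrel:
  assumes "ultrauniform_space Y W" "E \<in> W"
  shows "\<exists>B\<in>W. B \<subseteq> E \<and> eqrel Y B"
proof -
  obtain DD where DD: "\<forall>d\<in>DD. pseudoultrametric Y d" "W = generated_uniformity Y DD"
    using assms(1) unfolding ultrauniform_space_def by blast
  obtain F e where Fe: "finite F" "F \<subseteq> DD" "0 < e"
    "{(x, y). x \<in> Y \<and> y \<in> Y \<and> (\<forall>d\<in>F. d x y < e)} \<subseteq> E"
    using assms(2) DD(2) unfolding generated_uniformity_def by blast
  define B where "B = {(x, y). x \<in> Y \<and> y \<in> Y \<and> (\<forall>d\<in>F. d x y < e)}"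
  have pu: "\<And>d. d \<in> F \<Longrightarrow> pseudoultrametric Y d" using Fe(2) DD(1) by blast
  have "B \<in> W" unfolding DD(2) generated_uniformity_def B_def using Fe by blast
  moreover have "eqrel Y B" unfolding eqrel_def
  proof (intro conjI allI ballI impI)
    show "B \<subseteq> Y \<times> Y" unfolding B_def by auto
  next
    fix a assume a: "a \<in> Y"
    have "\<forall>d\<in>F. d a a < e"
    proof
      fix d assume "d \<in> F"
      then have "d a a = 0" using pu a unfolding pseudoultrametric_def by blast
      then show "d a a < e" using Fe(3) by simp
    qed
    then show "(a, a) \<in> B" unfolding B_def using a by auto
  next
    fix a b assume "(a, b) \<in> B" then show "(b, a) \<in> B"
      using pu unfolding B_def pseudoultrametric_def by auto
  next
    fix a b c assume ab: "(a, b) \<in> B" and bc: "(b, c) \<in> B"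
    have "d a c < e" if "d \<in> F" for d
    proof -
      have "d a c \<le> max (d a b) (d b c)" using pu[OF that] ab bc unfolding B_def pseudoultrametric_def by auto
      moreover have "d a b < e" "d b c < e" using ab bc that unfolding B_def by auto
      ultimately show ?thesis by simp
    qed
    then show "(a, c) \<in> B" using ab bc unfolding B_def by auto
  qed
  ultimately show ?thesis using Fe(4) B_def by blast
qed

lemma uu_Int:
  assumes "ultrauniform_space Y W" "E1 \<in> W" "E2 \<in> W"
  shows "E1 \<inter> E2 \<in> W"
proof -
  obtain DD where DD: "W = generated_uniformity Y DD"
    using assms(1) unfolding ultrauniform_space_def by blast
  obtain F1 e1 where F1: "finite F1" "F1 \<subseteq> DD" "0 < e1" "E1 \<subseteq> Y \<times> Y"
    "{(x, y). x \<in> Y \<and> y \<in> Y \<and> (\<forall>d\<in>F1. d x y < e1)} \<subseteq> E1"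
    using assms(2) DD unfolding generated_uniformity_def by blast
  obtain F2 e2 where F2: "finite F2" "F2 \<subseteq> DD" "0 < e2"
    "{(x, y). x \<in> Y \<and> y \<in> Y \<and> (\<forall>d\<in>F2. d x y < e2)} \<subseteq> E2"
    using assms(3) DD unfolding generated_uniformity_def by blast
  have "{(x, y). x \<in> Y \<and> y \<in> Y \<and> (\<forall>d\<in>F1 \<union> F2. d x y < min e1 e2)} \<subseteq> E1 \<inter> E2"
    using F1(5) F2(4) by auto
  moreover have "finite (F1 \<union> F2)" "F1 \<union> F2 \<subseteq> DD" "0 < min e1 e2" using F1 F2 by auto
  ultimately show ?thesis unfolding DD generated_uniformity_def using F1(4) by blast
qed

theorem theorem2p11:
  fixes v :: "'k::field \<Rightarrow> real" and p :: 'k and A :: "'a set" and P :: "('a \<Rightarrow> 'k) set"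
  assumes "nonarch_abs v" and "nondiscrete_abs v" and "locally_compact_abs v"
    and "v p < 1" and "\<forall>y. v y < 1 \<longrightarrow> v y \<le> v p"
    and "uniform_polyhedron v p A P"
  shows "ANRU P (c0_uniformity v P) TYPE('b)"
proof -
  note na = assms(1)
  define d :: "('a \<Rightarrow> 'k) \<Rightarrow> ('a \<Rightarrow> 'k) \<Rightarrow> real" where "d = c0dist v"
  define U where "U = c0_uniformity v P"
  have U_def': "U = generated_uniformity P {d}" unfolding U_def c0_uniformity_def d_def ..
  have PA: "P \<subseteq> c0 v A" using assms(6) unfolding uniform_polyhedron_def by (rule conjunct1)
  have dsym: "d x y = d y x" if "x \<in> P" "y \<in> P" for x y
    using c0dist_props(1)[OF na, where A=A] PA that unfolding pseudoultrametric_def d_def by blast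
  have dnn: "0 \<le> d x y" if "x \<in> P" "y \<in> P" for x y
    using c0dist_props(3)[OF na, where A=A] PA that unfolding d_def by blast
  have d0: "x = y" if "x \<in> P" "y \<in> P" "d x y = 0" for x y
    using c0dist_props(2)[OF na, where A=A] PA that unfolding d_def by blast
  have uuP: "ultrauniform_space P U"
  proof -
    have "pseudoultrametric P d"
      using c0dist_props(1)[OF na, where A=A] PA unfolding pseudoultrametric_def d_def
      by (meson subsetD)
    then show ?thesis unfolding ultrauniform_space_def U_def' by (intro exI[of _ "{d}"]) simp
  qed
  obtain \<delta> where \<delta>: "\<delta> > 0" and cplt: "\<And>(x::nat \<Rightarrow> 'a \<Rightarrow> 'k) (r::nat \<Rightarrow> real). (\<forall>n. x n \<in> P) \<Longrightarrow> (\<forall>m n. m \<le> n \<longrightarrow> d (x n) (x m) \<le> r m)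
     \<Longrightarrow> (\<forall>m. 0 < r m \<and> r m < \<delta>) \<Longrightarrow> (\<forall>e>0. \<exists>m. r m < e) \<Longrightarrow> (\<exists>z\<in>P. \<forall>m. d z (x m) \<le> r m)"
    using poly_complete[OF na assms(2) assms(3) assms(5) assms(6)] unfolding d_def by blast
  define \<rho> :: "nat \<Rightarrow> real" where "\<rho> n = \<delta> / (real n + 2)" for n
  have \<rho>pos: "\<rho> n > 0" for n unfolding \<rho>_def using \<delta> by simp
  have \<rho>lt: "\<rho> n < \<delta>" for n unfolding \<rho>_def using \<delta> by (simp add: divide_less_eq)
  have \<rho>mono: "\<rho> n \<le> \<rho> m" if "m \<le> n" for m n
    unfolding \<rho>_def using \<delta> that by (simp add: frac_le)
  have \<rho>0: "\<exists>m. \<rho> m < e" if "e > 0" for e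
  proof -
    obtain m :: nat where m: "\<delta> / e < real m" using reals_Archimedean2 by blast
    have "\<delta> < e * real m" using m that by (simp add: divide_less_eq mult.commute)
    also have "\<dots> < e * (real m + 2)" using that by simp
    finally have "\<delta> / (real m + 2) < e" by (simp add: divide_less_eq mult.commute)
    then show ?thesis unfolding \<rho>_def by blast
  qed
  have \<rho>0': "\<exists>m\<ge>n. \<rho> m < e" if e0: "e > 0" for e n
  proof -
    obtain m where "\<rho> m < e" using \<rho>0[OF e0] by blast
    then have "\<rho> (max m n) < e" using \<rho>mono[of m "max m n"] by simp
    then show ?thesis by (intro exI[of _ "max m n"]) simp
  qed
  show ?thesis unfolding ANRU_def U_def[symmetric]
  proof (intro conjI allI impI)
    show "ultrauniform_space P U" by (rule uuP)
    fix Y :: "'b set" and W e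
    assume H: "ultrauniform_space Y W \<and> uniform_embedding P U Y W e"
    then have uuY: "ultrauniform_space Y W" and emb: "uniform_embedding P U Y W e" by auto
    have emb': "inj_on e P \<and> unif_cont_map P U Y W e \<and>
     (\<exists>g. unif_cont_map (e ` P) (subspace_uniformity W (e ` P)) P U g \<and> (\<forall>x\<in>P. g (e x) = x))"
      using emb unfolding uniform_embedding_def .
    have uc: "unif_cont_map P U Y W e" using conjunct1[OF conjunct2[OF emb']] .
    have eY: "e ` P \<subseteq> Y" using uc unfolding unif_cont_map_def by (rule conjunct1)
    have ecu0: "\<forall>E\<in>W. \<exists>D\<in>U. \<forall>x y. (x, y) \<in> D \<longrightarrow> (e x, e y) \<in> E"
      using uc unfolding unif_cont_map_def by (rule conjunct2)
    from conjunct2[OF conjunct2[OF emb']] obtain g where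
      g: "unif_cont_map (e ` P) (subspace_uniformity W (e ` P)) P U g \<and> (\<forall>x\<in>P. g (e x) = x)"
      by (rule exE)
    have gcu: "\<forall>E\<in>U. \<exists>D\<in>subspace_uniformity W (e ` P). \<forall>x y. (x, y) \<in> D \<longrightarrow> (g x, g y) \<in> E"
      using conjunct1[OF g] unfolding unif_cont_map_def by (rule conjunct2)
    have ge: "\<forall>x\<in>P. g (e x) = x" using g by (rule conjunct2)
    have ecu: "\<exists>\<eta>>0. \<forall>x\<in>P. \<forall>y\<in>P. d x y < \<eta> \<longrightarrow> (e x, e y) \<in> E" if EW0: "E \<in> W" for E
    proof -
      obtain D where D: "D \<in> U" "\<forall>x y. (x, y) \<in> D \<longrightarrow> (e x, e y) \<in> E" using ecu0 EW0 by blast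
      obtain \<eta> where "\<eta> > 0" "\<forall>x\<in>P. \<forall>y\<in>P. d x y < \<eta> \<longrightarrow> (x, y) \<in> D"
        using gen_unif_P[of D P d] D(1) unfolding U_def' by blast
      then show ?thesis using D(2) by blast
    qed
    have "\<exists>B. B \<in> W \<and> eqrel Y B \<and> (\<forall>x\<in>P. \<forall>x'\<in>P. (e x, e x') \<in> B \<longrightarrow> d x x' < \<rho> n)" for n
    proof -
      have T: "{(x, y). x \<in> P \<and> y \<in> P \<and> d x y < \<rho> n} \<in> U"
        unfolding U_def' by (rule gen_unif_ball[OF \<rho>pos])
      obtain D where D: "D \<in> subspace_uniformity W (e ` P)"
        "\<forall>x y. (x, y) \<in> D \<longrightarrow> (g x, g y) \<in> {(x, y). x \<in> P \<and> y \<in> P \<and> d x y < \<rho> n}"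
        using gcu T by blast
      obtain E where E: "E \<in> W" "D = E \<inter> (e ` P \<times> e ` P)"
        using D(1) unfolding subspace_uniformity_def by blast
      obtain B where B: "B \<in> W" "B \<subseteq> E" "eqrel Y B" using uu_eqrel[OF uuY E(1)] by blast
      have "\<forall>x\<in>P. \<forall>x'\<in>P. (e x, e x') \<in> B \<longrightarrow> d x x' < \<rho> n"
      proof (intro ballI impI)
        fix x x' assume xx: "x \<in> P" "x' \<in> P" "(e x, e x') \<in> B"
        then have "(e x, e x') \<in> D" using E(2) B(2) by blast
        then have "(g (e x), g (e x')) \<in> {(x, y). x \<in> P \<and> y \<in> P \<and> d x y < \<rho> n}" using D(2) by blast
        then show "d x x' < \<rho> n" using ge xx by simp
      qed
      then show ?thesis using B by blast
    qed
    then obtain B where B: "\<And>n. B n \<in> W" "\<And>n. eqrel Y (B n)"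
      "\<And>n. \<forall>x\<in>P. \<forall>x'\<in>P. (e x, e x') \<in> B n \<longrightarrow> d x x' < \<rho> n"
      by metis
    define E where "E n = \<Inter> (B ` {..n})" for n
    have E0: "E 0 = B 0" unfolding E_def by simp
    have ES: "E (Suc n) = B (Suc n) \<inter> E n" for n unfolding E_def by (simp add: atMost_Suc)
    have EW: "E n \<in> W" for n
      by (induction n) (auto simp: E0 ES B(1) intro: uu_Int[OF uuY])
    have Eeq: "eqrel Y (E n)" for n
    proof (induction n)
      case 0 then show ?case using B(2) by (simp add: E0)
    next
      case (Suc n)
      then show ?case using B(2)[of "Suc n"] unfolding ES eqrel_def by blast
    qed
    have Emono: "E n \<subseteq> E m" if "m \<le> n" for m n
      unfolding E_def using that by auto
    have EB: "E n \<subseteq> B n" for n unfolding E_def by auto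
    have ED: "d x x' < \<rho> n" if "x \<in> P" "x' \<in> P" "(e x, e x') \<in> E n" for x x' n
      using B(3)[of n] EB that by blast
    have Erefl: "(a, a) \<in> E n" if "a \<in> Y" for a n using Eeq[of n] that unfolding eqrel_def by blast
    have Esym: "(b, a) \<in> E n" if "(a, b) \<in> E n" for a b n using Eeq[of n] that unfolding eqrel_def by blast
    have Etr: "(a, c) \<in> E n" if "(a, b) \<in> E n" "(b, c) \<in> E n" for a b c n
      using Eeq[of n] that unfolding eqrel_def by blast
    have Esub: "E n \<subseteq> Y \<times> Y" for n using Eeq[of n] unfolding eqrel_def by blast
    define Lev where "Lev y n \<longleftrightarrow> (\<exists>x\<in>P. (e x, y) \<in> E n)" for y n
    define V where "V = {y. \<exists>x\<in>e ` P. (x, y) \<in> E 0}"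
    define zsel where "zsel y = (SOME z. z \<in> P \<and> (\<forall>n. (e z, y) \<in> E n))" for y
    define N where "N y = (LEAST n. \<not> Lev y n)" for y
    define csel where "csel y = (SOME x. x \<in> {x \<in> P. (e x, y) \<in> E (N y - 1)})" for y
    define r where "r y = (if (\<forall>n. Lev y n) then e (zsel y) else e (csel y))" for y
    have Levmono: "Lev y m" if "Lev y n" "m \<le> n" for y m n
      using that Emono unfolding Lev_def by blast
    have K1: "zsel y \<in> P \<and> (\<forall>n. (e (zsel y), y) \<in> E n)" if "\<forall>n. Lev y n" for y
    proof -
      have "\<forall>n. \<exists>x. x \<in> P \<and> (e x, y) \<in> E n" using that unfolding Lev_def by blast
      then obtain xs where xs: "\<And>n. xs n \<in> P" "\<And>n. (e (xs n), y) \<in> E n" by metis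
      have "\<exists>z\<in>P. \<forall>m. d z (xs m) \<le> \<rho> m"
      proof (rule cplt)
        show "\<forall>n. xs n \<in> P" using xs by blast
        show "\<forall>m. 0 < \<rho> m \<and> \<rho> m < \<delta>" using \<rho>pos \<rho>lt by blast
        show "\<forall>e>0. \<exists>m. \<rho> m < e" using \<rho>0 by blast
        show "\<forall>m n. m \<le> n \<longrightarrow> d (xs n) (xs m) \<le> \<rho> m"
        proof (intro allI impI)
          fix m n :: nat assume "m \<le> n"
          then have "(e (xs n), y) \<in> E m" using xs(2)[of n] Emono by blast
          then have "(e (xs n), e (xs m)) \<in> E m" using xs(2)[of m] Esym Etr by blast
          then show "d (xs n) (xs m) \<le> \<rho> m" using ED xs(1) by (meson less_imp_le)
        qed
      qed
      then obtain z where z: "z \<in> P" "\<And>m. d z (xs m) \<le> \<rho> m" by blast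
      have "(e z, y) \<in> E n" for n
      proof -
        obtain \<eta> where \<eta>: "\<eta> > 0" "\<forall>x\<in>P. \<forall>y\<in>P. d x y < \<eta> \<longrightarrow> (e x, e y) \<in> E n"
          using ecu[OF EW] by blast
        obtain m where m: "m \<ge> n" "\<rho> m < \<eta>" using \<rho>0'[OF \<eta>(1)] by blast
        have "d z (xs m) < \<eta>" using z(2)[of m] m by simp
        then have "(e z, e (xs m)) \<in> E n" using \<eta>(2) z(1) xs(1) by blast
        moreover have "(e (xs m), y) \<in> E n" using xs(2)[of m] Emono m(1) by blast
        ultimately show ?thesis using Etr by blast
      qed
      then have "\<exists>z. z \<in> P \<and> (\<forall>n. (e z, y) \<in> E n)" using z(1) by blast
      then show ?thesis unfolding zsel_def by (rule someI_ex)
    qed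
    have K2: "Lev y (N y - 1) \<and> (\<forall>k. Lev y k \<longrightarrow> k \<le> N y - 1) \<and> csel y \<in> P \<and> (e (csel y), y) \<in> E (N y - 1)"
      if "y \<in> V" "\<not> (\<forall>n. Lev y n)" for y
    proof -
      have L0: "Lev y 0" using that(1) unfolding V_def Lev_def E0 by blast
      have nN: "\<not> Lev y (N y)" unfolding N_def using that(2) by (metis (mono_tags, lifting) LeastI_ex)
      have "N y \<noteq> 0"
      proof
        assume "N y = 0" then show False using nN L0 by simp
      qed
      then have "N y - 1 < N y" by simp
      then have "\<not> \<not> Lev y (N y - 1)" unfolding N_def by (rule not_less_Least)
      then have LM: "Lev y (N y - 1)" by simp
      have kle: "k \<le> N y - 1" if "Lev y k" for k
      proof (rule ccontr)
        assume "\<not> k \<le> N y - 1"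
        then have "N y \<le> k" by simp
        then show False using Levmono[OF that] nN by blast
      qed
      have "\<exists>x. x \<in> {x \<in> P. (e x, y) \<in> E (N y - 1)}" using LM unfolding Lev_def by blast
      then have "csel y \<in> {x \<in> P. (e x, y) \<in> E (N y - 1)}" unfolding csel_def by (rule someI_ex)
      then show ?thesis using LM kle by blast
    qed
    have K3: "r y \<in> e ` P \<and> (\<forall>k. Lev y k \<longrightarrow> (r y, y) \<in> E k)" if "y \<in> V" for y
    proof (cases "\<forall>n. Lev y n")
      case True
      then show ?thesis using K1[OF True] unfolding r_def by auto
    next
      case False
      have "(r y, y) \<in> E k" if "Lev y k" for k
      proof -
        have "k \<le> N y - 1" using K2[OF \<open>y \<in> V\<close> False] that by blast
        then show ?thesis using K2[OF \<open>y \<in> V\<close> False] Emono False unfolding r_def by auto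
      qed
      then show ?thesis using K2[OF \<open>y \<in> V\<close> False] False unfolding r_def by auto
    qed
    have VY: "V \<subseteq> Y" unfolding V_def using Esub by blast
    have PV: "e ` P \<subseteq> V" unfolding V_def using eY Erefl by blast
    have K4: "r (e x) = e x" if "x \<in> P" for x
    proof -
      have ex: "e x \<in> Y" using eY that by blast
      have all: "\<forall>n. Lev (e x) n" unfolding Lev_def using that Erefl[OF ex] by blast
      then have z: "zsel (e x) \<in> P" "\<And>n. (e (zsel (e x)), e x) \<in> E n" using K1 by blast+
      have "d (zsel (e x)) x < \<rho> n" for n using ED[OF z(1) that z(2)] .
      note lt = this
      have "d (zsel (e x)) x \<le> 0"
      proof (rule ccontr)
        assume "\<not> d (zsel (e x)) x \<le> 0"
        then obtain m where "\<rho> m < d (zsel (e x)) x" using \<rho>0 by force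
        then show False using lt[of m] by simp
      qed
      then have "d (zsel (e x)) x = 0" using dnn[OF z(1) that] by simp
      then have "zsel (e x) = x" using d0 z(1) that by blast
      then show ?thesis unfolding r_def using all by simp
    qed
    have K5: "(r y, r y') \<in> E n" if yV: "y \<in> V" "y' \<in> V" "(y, y') \<in> E n" for y y' n
    proof -
      have LL: "Lev y m \<longleftrightarrow> Lev y' m" if "m \<le> n" for m
      proof -
        have yy: "(y, y') \<in> E m" "(y', y) \<in> E m" using \<open>(y, y') \<in> E n\<close> Emono[OF that] Esym by blast+
        show ?thesis unfolding Lev_def using yy Etr by blast
      qed
      show ?thesis
      proof (cases "Lev y n")
        case True
        then have "Lev y' n" using LL by blast
        then have "(r y, y) \<in> E n" "(r y', y') \<in> E n" using K3 that True by blast+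
        then show ?thesis using that(3) Esym Etr by blast
      next
        case False
        then have F': "\<not> Lev y' n" using LL by blast
        have nf: "\<not> (\<forall>n. Lev y n)" "\<not> (\<forall>n. Lev y' n)" using False F' by blast+
        have Ny: "N y \<le> n" unfolding N_def using False by (rule Least_le)
        have Ny': "N y' \<le> n" unfolding N_def using F' by (rule Least_le)
        have nN: "\<not> Lev y (N y)" "\<not> Lev y' (N y')" unfolding N_def using nf by (metis (mono_tags, lifting) LeastI_ex)+
        have "N y' \<le> N y" unfolding N_def[of y']
        proof (rule Least_le)
          show "\<not> Lev y' (N y)" using nN(1) LL[OF Ny] by simp
        qed
        moreover have "N y \<le> N y'" unfolding N_def[of y]
        proof (rule Least_le)
          show "\<not> Lev y (N y')" using nN(2) LL[OF Ny'] by simp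
        qed
        ultimately have NN: "N y = N y'" by simp
        have "N y - 1 \<le> n" using Ny by simp
        then have "E n \<subseteq> E (N y - 1)" by (rule Emono)
        then have yyM: "(y, y') \<in> E (N y - 1)" using that(3) by blast
        have iff: "(e x, y) \<in> E (N y - 1) \<longleftrightarrow> (e x, y') \<in> E (N y - 1)" for x
        proof
          assume "(e x, y) \<in> E (N y - 1)" then show "(e x, y') \<in> E (N y - 1)" using yyM by (rule Etr)
        next
          assume "(e x, y') \<in> E (N y - 1)" then show "(e x, y) \<in> E (N y - 1)" using Esym[OF yyM] by (rule Etr)
        qed
        have "{x \<in> P. (e x, y) \<in> E (N y - 1)} = {x \<in> P. (e x, y') \<in> E (N y' - 1)}"
          using iff by (simp add: NN[symmetric])
        then have "csel y = csel y'" unfolding csel_def by simp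
        then have "r y = r y'" unfolding r_def using nf(1) nf(2) by (simp only: if_False)
        moreover obtain x0 where "x0 \<in> P" "r y = e x0" using K3[OF yV(1)] by blast
        then have "r y \<in> Y" using eY by blast
        ultimately show ?thesis using Erefl by simp
      qed
    qed
    show "\<exists>V r. uniform_nbhd Y W (e ` P) V \<and>
               unif_cont_map V (subspace_uniformity W V) (e ` P) (subspace_uniformity W (e ` P)) r \<and>
               (\<forall>y\<in>e ` P. r y = y)"
    proof (intro exI conjI)
      show "uniform_nbhd Y W (e ` P) V" unfolding uniform_nbhd_def
        using PV VY EW[of 0] unfolding V_def by blast
      show "\<forall>y\<in>e ` P. r y = y" using K4 by blast
      show "unif_cont_map V (subspace_uniformity W V) (e ` P) (subspace_uniformity W (e ` P)) r"
        unfolding unif_cont_map_def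
      proof (intro conjI ballI)
        show "r ` V \<subseteq> e ` P" using K3 by blast
        fix Et assume "Et \<in> subspace_uniformity W (e ` P)"
        then obtain E' where E': "E' \<in> W" "Et = E' \<inter> (e ` P \<times> e ` P)"
          unfolding subspace_uniformity_def by blast
        obtain \<eta> where \<eta>: "\<eta> > 0" "\<forall>x\<in>P. \<forall>y\<in>P. d x y < \<eta> \<longrightarrow> (e x, e y) \<in> E'"
          using ecu[OF E'(1)] by blast
        obtain n where n: "\<rho> n < \<eta>" using \<rho>0[OF \<eta>(1)] by blast
        have D: "E n \<inter> (V \<times> V) \<in> subspace_uniformity W V"
          unfolding subspace_uniformity_def using EW by blast
        have "\<forall>y y'. (y, y') \<in> E n \<inter> (V \<times> V) \<longrightarrow> (r y, r y') \<in> Et"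
        proof (intro allI impI)
          fix y y' assume yy: "(y, y') \<in> E n \<inter> (V \<times> V)"
          then have rr: "(r y, r y') \<in> E n" using K5 by blast
          obtain x where x: "x \<in> P" "r y = e x" using K3 yy by blast
          obtain x' where x': "x' \<in> P" "r y' = e x'" using K3 yy by blast
          have "d x x' < \<rho> n" using ED[OF x(1) x'(1)] rr x x' by simp
          then have "(e x, e x') \<in> E'" using \<eta>(2) x x' n by simp
          then show "(r y, r y') \<in> Et" using E'(2) x x' by auto
        qed
        then show "\<exists>D\<in>subspace_uniformity W V. \<forall>y y'. (y, y') \<in> D \<longrightarrow> (r y, r y') \<in> Et"
          using D by blast
      qed
    qed
  qed
qed

end
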